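(* Let $T_0\subset\overline{\mathbb R}^X$ be an extended vector lattice, $T_0^+=\{x\in T_0:x\ge0\}$, and let $S:T_0\to\mathbb R$ be an $S$-integral. For $x\in T_0^+$ put $P(x):=\sup\{S(\varphi):\varphi\in T_0,\ 0\le\varphi\le x\}$ (a real number), and for $x\in T_0$ put $S^+(x):=P(x\vee0)-P((-x)\vee0)$, $S^-(x):=S^+(x)-S(x)$ and $|S|(x):=S^+(x)+S^-(x)$. Then $P(x_1+x_2)=P(x_1)+P(x_2)$ for $x_1,x_2\in T_0^+$, $S^+(x)=P(\varphi)-P(\psi)$ whenever $x=\varphi-\psi$ with $\varphi,\psi\in T_0^+$, and each of $S^+$, $S^-$ and $|S|$ is an $I$-integral on $T_0$; in particular $S=S^+-S^-$ is a difference of two $I$-integrals.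
   Context: Let $X$ be a nonempty set, $\overline{\mathbb R}=\mathbb R\cup\{-\infty,\infty\}$, $\overline{\mathbb R}^X$ the functions $X\to\overline{\mathbb R}$ with pointwise order, $\wedge$, $\vee$, $|\cdot|$. Addition convention: $(x+y)(t)=x(t)+y(t)$ when defined and $0$ where $\{x(t),y(t)\}=\{\infty,-\infty\}$; $x-y:=x+(-y)$; scalar multiples pointwise with $0\cdot(\pm\infty)=0$. An extended vector lattice is a set $T_0\subset\overline{\mathbb R}^X$ closed under real linear combinations, $\wedge$, $\vee$, and such that for $x,y\in T_0$ and any $c\in\overline{\mathbb R}$ the function equal to $x(t)+y(t)$ where defined and $c$ where $\{x(t),y(t)\}=\{\infty,-\infty\}$ is in $T_0$. $(x_n)\searrow0$ means pointwise nonincreasing with pointwise limit $0$. An $I$-integral on $T_0$ is a linear map $I:T_0\to\mathbb R$ with $I(x)\ge0$ for $x\ge0$ and $I(x_n)\to0$ whenever $(x_n)\subset T_0$, $(x_n)\searrow0$. An $S$-integral on $T_0$ is a map $S:T_0\to\mathbb R$ such that (S1) $S$ is linear; (S2) $(x_n)\subset T_0$, $(x_n)\searrow0$ implies $S(x_n)\to0$; (S3) there is a function $M:T_0^+\to\mathbb R$ with $M(\varphi)\le M(\psi)$ whenever $\varphi,\psi\in T_0^+$, $\varphi\le\psi$, and $|S(x)|\le M(|x|)$ for all $x\in T_0$. *)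

theory Defs
  imports "HOL-Library.Extended_Real"
begin

text \<open>Functions X -> extended reals, with the paper's addition convention:
  undefined sums (infinity plus minus infinity) are set to 0.\<close>

definition eadd :: "ereal \<Rightarrow> ereal \<Rightarrow> ereal" where
  "eadd a b = (if {a, b} = {\<infinity>, -\<infinity>} then 0 else a + b)"

definition fadd :: "('a \<Rightarrow> ereal) \<Rightarrow> ('a \<Rightarrow> ereal) \<Rightarrow> ('a \<Rightarrow> ereal)" where
  "fadd x y = (\<lambda>t. eadd (x t) (y t))"

definition fneg :: "('a \<Rightarrow> ereal) \<Rightarrow> ('a \<Rightarrow> ereal)" where
  "fneg x = (\<lambda>t. - x t)"

definition fsub :: "('a \<Rightarrow> ereal) \<Rightarrow> ('a \<Rightarrow> ereal) \<Rightarrow> ('a \<Rightarrow> ereal)" where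
  "fsub x y = fadd x (fneg y)"

text \<open>Real scalar multiple; note 0 * (+-infinity) = 0 in ereal.\<close>
definition fscale :: "real \<Rightarrow> ('a \<Rightarrow> ereal) \<Rightarrow> ('a \<Rightarrow> ereal)" where
  "fscale c x = (\<lambda>t. ereal c * x t)"

definition fabs :: "('a \<Rightarrow> ereal) \<Rightarrow> ('a \<Rightarrow> ereal)" where
  "fabs x = (\<lambda>t. \<bar>x t\<bar>)"

definition fzero :: "'a \<Rightarrow> ereal" where
  "fzero = (\<lambda>t. 0)"

definition ext_vector_lattice :: "('a \<Rightarrow> ereal) set \<Rightarrow> bool" where
  "ext_vector_lattice T0 \<longleftrightarrow>
     (\<forall>x\<in>T0. \<forall>y\<in>T0. \<forall>a b. fadd (fscale a x) (fscale b y) \<in> T0) \<and>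
     (\<forall>x\<in>T0. \<forall>y\<in>T0. inf x y \<in> T0 \<and> sup x y \<in> T0) \<and>
     (\<forall>x\<in>T0. \<forall>y\<in>T0. \<forall>c::ereal.
        (\<lambda>t. if {x t, y t} = {\<infinity>, -\<infinity>} then c else x t + y t) \<in> T0)"

definition nonneg_part :: "('a \<Rightarrow> ereal) set \<Rightarrow> ('a \<Rightarrow> ereal) set" where
  "nonneg_part T0 = {x \<in> T0. fzero \<le> x}"

definition decr_to_zero :: "(nat \<Rightarrow> 'a \<Rightarrow> ereal) \<Rightarrow> bool" where
  "decr_to_zero xs \<longleftrightarrow> (\<forall>n. xs (Suc n) \<le> xs n) \<and> (\<forall>t. (\<lambda>n. xs n t) \<longlonglongrightarrow> 0)"

definition linear_on :: "('a \<Rightarrow> ereal) set \<Rightarrow> (('a \<Rightarrow> ereal) \<Rightarrow> real) \<Rightarrow> bool" where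
  "linear_on T0 F \<longleftrightarrow>
     (\<forall>x\<in>T0. \<forall>y\<in>T0. F (fadd x y) = F x + F y) \<and>
     (\<forall>x\<in>T0. \<forall>c. F (fscale c x) = c * F x)"

definition I_integral :: "('a \<Rightarrow> ereal) set \<Rightarrow> (('a \<Rightarrow> ereal) \<Rightarrow> real) \<Rightarrow> bool" where
  "I_integral T0 I \<longleftrightarrow> linear_on T0 I \<and>
     (\<forall>x\<in>T0. fzero \<le> x \<longrightarrow> I x \<ge> 0) \<and>
     (\<forall>xs. (\<forall>n. xs n \<in> T0) \<and> decr_to_zero xs \<longrightarrow> (\<lambda>n. I (xs n)) \<longlonglongrightarrow> 0)"

definition S_integral :: "('a \<Rightarrow> ereal) set \<Rightarrow> (('a \<Rightarrow> ereal) \<Rightarrow> real) \<Rightarrow> bool" where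
  "S_integral T0 S \<longleftrightarrow> linear_on T0 S \<and>
     (\<forall>xs. (\<forall>n. xs n \<in> T0) \<and> decr_to_zero xs \<longrightarrow> (\<lambda>n. S (xs n)) \<longlonglongrightarrow> 0) \<and>
     (\<exists>M :: ('a \<Rightarrow> ereal) \<Rightarrow> real.
        (\<forall>\<phi>\<in>nonneg_part T0. \<forall>\<psi>\<in>nonneg_part T0. \<phi> \<le> \<psi> \<longrightarrow> M \<phi> \<le> M \<psi>) \<and>
        (\<forall>x\<in>T0. \<bar>S x\<bar> \<le> M (fabs x)))"

definition Ppart :: "('a \<Rightarrow> ereal) set \<Rightarrow> (('a \<Rightarrow> ereal) \<Rightarrow> real) \<Rightarrow> ('a \<Rightarrow> ereal) \<Rightarrow> real" where
  "Ppart T0 S x = Sup {S \<phi> | \<phi>. \<phi> \<in> T0 \<and> fzero \<le> \<phi> \<and> \<phi> \<le> x}"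

definition Splus :: "('a \<Rightarrow> ereal) set \<Rightarrow> (('a \<Rightarrow> ereal) \<Rightarrow> real) \<Rightarrow> ('a \<Rightarrow> ereal) \<Rightarrow> real" where
  "Splus T0 S x = Ppart T0 S (sup x fzero) - Ppart T0 S (sup (fneg x) fzero)"

definition Sminus :: "('a \<Rightarrow> ereal) set \<Rightarrow> (('a \<Rightarrow> ereal) \<Rightarrow> real) \<Rightarrow> ('a \<Rightarrow> ereal) \<Rightarrow> real" where
  "Sminus T0 S x = Splus T0 S x - S x"

definition Sabs :: "('a \<Rightarrow> ereal) set \<Rightarrow> (('a \<Rightarrow> ereal) \<Rightarrow> real) \<Rightarrow> ('a \<Rightarrow> ereal) \<Rightarrow> real" where
  "Sabs T0 S x = Splus T0 S x + Sminus T0 S x"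

end

theory Submission
  imports Defs
begin
lemma eadd_alt: "eadd a b = (if (a = \<infinity> \<and> b = -\<infinity>) \<or> (a = -\<infinity> \<and> b = \<infinity>) then 0 else a + b)"
  unfolding eadd_def doubleton_eq_iff by auto

lemma e_split: "0 \<le> (q::ereal) \<Longrightarrow> q \<le> p \<Longrightarrow> eadd q (eadd p (-q)) = p"
  by (cases q; cases p) (auto simp: eadd_alt)

lemma e_add_nonneg: "0 \<le> (a::ereal) \<Longrightarrow> 0 \<le> b \<Longrightarrow> eadd a b = a + b"
  by (cases a; cases b) (auto simp: eadd_alt)

lemma e_dec1: "0 \<le> (p::ereal) \<Longrightarrow> p \<le> a \<Longrightarrow> 0 \<le> b \<Longrightarrow> b \<le> a \<Longrightarrow> 
   0 \<le> eadd p (-(min p (eadd a (-b)))) \<and> eadd p (-(min p (eadd a (-b)))) \<le> b"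
  by (cases p; cases a; cases b) (auto simp: eadd_alt min_def)

lemma e_wform: "0 \<le> (p::ereal) \<Longrightarrow> p \<le> a \<Longrightarrow> 0 \<le> b \<Longrightarrow> b \<le> a \<Longrightarrow>
  eadd p (-(min p (eadd a (-b)))) = (if a = \<infinity> then (if b = \<infinity> then p else 0) else max 0 (p - a + b))"
  by (cases p; cases a; cases b) (auto simp: eadd_alt min_def max_def)
lemma e_dec2: "0 \<le> (p::ereal) \<Longrightarrow> p \<le> a \<Longrightarrow> 0 \<le> b' \<Longrightarrow> b' \<le> b \<Longrightarrow> b \<le> a \<Longrightarrow> 
   eadd p (-(min p (eadd a (-b')))) \<le> eadd p (-(min p (eadd a (-b))))"
proof -
  assume h: "0 \<le> p" "p \<le> a" "0 \<le> b'" "b' \<le> b" "b \<le> a"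
  show ?thesis
  proof (cases "a = \<infinity>")
    case True
    have "b' = \<infinity> \<Longrightarrow> b = \<infinity>" using h(4) by simp
    then show ?thesis using h True by (auto simp: e_wform order.trans[of 0 b' b])
  next
    case False
    then have "max 0 (p - a + b') \<le> max 0 (p - a + b)" using h
      by (cases p; cases a; cases b; cases b') (auto simp: max_def)
    then show ?thesis using h False by (simp add: e_wform order.trans[of 0 b' b] order.trans[of b' b a])
  qed
qed

lemma e_sub_nonneg: "0 \<le> (b::ereal) \<Longrightarrow> b \<le> a \<Longrightarrow> 0 \<le> eadd a (-b) \<and> eadd (eadd a (-b)) b = a"
  by (cases a; cases b) (auto simp: eadd_alt)

lemma e_split2: "0 \<le> (p::ereal) \<Longrightarrow> 0 \<le> a \<Longrightarrow> 0 \<le> b \<Longrightarrow> p \<le> a + b \<Longrightarrow>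
   0 \<le> eadd p (-(min p a)) \<and> eadd p (-(min p a)) \<le> b"
  by (cases p; cases a; cases b) (auto simp: eadd_alt min_def)

lemma e_pm: "0 \<le> (f::ereal) \<Longrightarrow> 0 \<le> g \<Longrightarrow> eadd (max (eadd f (-g)) 0) g = eadd (max (-(eadd f (-g))) 0) f"
  by (cases f; cases g) (auto simp: eadd_alt max_def)

lemma e_lin: "eadd a b = eadd (eadd (max a 0) (max b 0)) (-(eadd (max (-a) 0) (max (-b) 0)))"
  by (cases a; cases b) (auto simp: eadd_alt max_def)

lemma e_sc1: "0 \<le> c \<Longrightarrow> max (ereal c * a) 0 = ereal c * max a 0"
  by (cases a) (auto simp: max_def mult_le_0_iff zero_le_mult_iff)

lemma e_sc1': "0 \<le> c \<Longrightarrow> max (-(ereal c * a)) 0 = ereal c * max (-a) 0"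
  by (cases a) (auto simp: max_def mult_le_0_iff zero_le_mult_iff)

lemma e_sc2: "c < 0 \<Longrightarrow> max (ereal c * a) 0 = ereal (-c) * max (-a) 0"
  by (cases a) (auto simp: max_def mult_le_0_iff zero_le_mult_iff)

lemma e_sc2': "c < 0 \<Longrightarrow> max (-(ereal c * a)) 0 = ereal (-c) * max a 0"
  by (cases a) (auto simp: max_def mult_le_0_iff zero_le_mult_iff)

lemma e_inv: "0 < c \<Longrightarrow> ereal (1/c) * (ereal c * a) = a"
  by (cases a) auto

lemma e_neg: "ereal (-1) * a = - a"
  by (cases a) auto

lemma e_nn: "0 \<le> c \<Longrightarrow> 0 \<le> (a::ereal) \<Longrightarrow> 0 \<le> ereal c * a"
  by (cases a) auto

lemma decr_nonneg: assumes "decr_to_zero xs" shows "fzero \<le> xs n"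
  unfolding le_fun_def fzero_def
proof
  fix t
  have lim: "(\<lambda>m. xs m t) \<longlonglongrightarrow> 0" using assms by (simp add: decr_to_zero_def)
  have "decseq (\<lambda>m. xs m t)"
    by (rule decseq_SucI) (use assms in \<open>auto simp: decr_to_zero_def le_fun_def\<close>)
  then have "\<forall>m\<ge>n. xs m t \<le> xs n t" by (simp add: decseq_def)
  then show "0 \<le> xs n t" by (intro LIMSEQ_le_const2[OF lim]) auto
qed

lemma decr_le0: assumes "decr_to_zero xs" shows "xs n \<le> xs 0"
  unfolding le_fun_def
proof
  fix t
  have "decseq (\<lambda>m. xs m t)"
    by (rule decseq_SucI) (use assms in \<open>auto simp: decr_to_zero_def le_fun_def\<close>)
  then show "xs n t \<le> xs 0 t" by (simp add: decseq_def)
qed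

locale SI =
  fixes T0 :: "('a \<Rightarrow> ereal) set" and S :: "('a \<Rightarrow> ereal) \<Rightarrow> real"
  assumes evl: "ext_vector_lattice T0" and sint: "S_integral T0 S"
begin

abbreviation "P \<equiv> Ppart T0 S"

lemma lin: "x \<in> T0 \<Longrightarrow> y \<in> T0 \<Longrightarrow> fadd (fscale a x) (fscale b y) \<in> T0"
  using evl unfolding ext_vector_lattice_def by blast
lemma inf_T0: "x \<in> T0 \<Longrightarrow> y \<in> T0 \<Longrightarrow> inf x y \<in> T0"
  using evl unfolding ext_vector_lattice_def by blast
lemma sup_T0: "x \<in> T0 \<Longrightarrow> y \<in> T0 \<Longrightarrow> sup x y \<in> T0"
  using evl unfolding ext_vector_lattice_def by blast
lemma fscale_one[simp]: "fscale 1 x = x" by (simp add: fscale_def)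
lemma fscale_zero: "fscale 0 x = fzero" by (simp add: fscale_def fzero_def zero_ereal_def[symmetric])
lemma fadd_zero: "fadd x fzero = x" by (simp add: fadd_def fzero_def eadd_alt)
lemma fadd_T0: "x \<in> T0 \<Longrightarrow> y \<in> T0 \<Longrightarrow> fadd x y \<in> T0" using lin[of x y 1 1] by simp
lemma fscale_T0: "x \<in> T0 \<Longrightarrow> fscale c x \<in> T0"
  using lin[of x x c 0] by (simp add: fscale_zero fadd_zero)
lemma fzero_T0: "x \<in> T0 \<Longrightarrow> fzero \<in> T0" using fscale_T0[of x 0] by (simp add: fscale_zero)
lemma fneg_eq: "fneg x = fscale (-1) x" by (simp add: fneg_def fscale_def e_neg)
lemma fneg_T0: "x \<in> T0 \<Longrightarrow> fneg x \<in> T0" by (simp add: fneg_eq fscale_T0)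
lemma fsub_T0: "x \<in> T0 \<Longrightarrow> y \<in> T0 \<Longrightarrow> fsub x y \<in> T0" by (simp add: fsub_def fadd_T0 fneg_T0)

lemma S_add: "x \<in> T0 \<Longrightarrow> y \<in> T0 \<Longrightarrow> S (fadd x y) = S x + S y"
  using sint unfolding S_integral_def linear_on_def by blast
lemma S_scale: "x \<in> T0 \<Longrightarrow> S (fscale c x) = c * S x"
  using sint unfolding S_integral_def linear_on_def by blast
lemma S_cont: "(\<And>n. xs n \<in> T0) \<Longrightarrow> decr_to_zero xs \<Longrightarrow> (\<lambda>n. S (xs n)) \<longlonglongrightarrow> 0"
  using sint unfolding S_integral_def by blast
lemma S_zero: "fzero \<in> T0 \<Longrightarrow> S fzero = 0"
  using S_scale[of fzero 0] by (simp add: fscale_zero)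

lemma nn_T0: "x \<in> nonneg_part T0 \<Longrightarrow> x \<in> T0" by (simp add: nonneg_part_def)
lemma nn_ge: "x \<in> nonneg_part T0 \<Longrightarrow> fzero \<le> x" by (simp add: nonneg_part_def)

lemma A_bdd: "x \<in> nonneg_part T0 \<Longrightarrow> bdd_above {S \<phi> | \<phi>. \<phi> \<in> T0 \<and> fzero \<le> \<phi> \<and> \<phi> \<le> x}"
proof -
  assume x: "x \<in> nonneg_part T0"
  obtain M :: "('a \<Rightarrow> ereal) \<Rightarrow> real" where
    Mm: "\<forall>\<phi>\<in>nonneg_part T0. \<forall>\<psi>\<in>nonneg_part T0. \<phi> \<le> \<psi> \<longrightarrow> M \<phi> \<le> M \<psi>" and
    Mb: "\<forall>x\<in>T0. \<bar>S x\<bar> \<le> M (fabs x)"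
    using sint unfolding S_integral_def by blast
  show ?thesis
  proof (rule bdd_aboveI[of _ "M x"])
    fix r assume "r \<in> {S \<phi> | \<phi>. \<phi> \<in> T0 \<and> fzero \<le> \<phi> \<and> \<phi> \<le> x}"
    then obtain \<phi> where p: "r = S \<phi>" "\<phi> \<in> T0" "fzero \<le> \<phi>" "\<phi> \<le> x" by blast
    have fa: "fabs \<phi> = \<phi>" using p(3) by (auto simp: fabs_def fzero_def le_fun_def fun_eq_iff)
    have "r \<le> \<bar>S \<phi>\<bar>" using p by simp
    also have "\<dots> \<le> M \<phi>" using Mb p fa by metis
    also have "\<dots> \<le> M x" using Mm p x by (auto simp: nonneg_part_def)
    finally show "r \<le> M x" .
  qed
qed

lemma P_upper: "x \<in> nonneg_part T0 \<Longrightarrow> \<phi> \<in> T0 \<Longrightarrow> fzero \<le> \<phi> \<Longrightarrow> \<phi> \<le> x \<Longrightarrow> S \<phi> \<le> P x"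
  unfolding Ppart_def by (rule cSup_upper) (use A_bdd in auto)

lemma P_least: "x \<in> nonneg_part T0 \<Longrightarrow> (\<And>\<phi>. \<phi> \<in> T0 \<Longrightarrow> fzero \<le> \<phi> \<Longrightarrow> \<phi> \<le> x \<Longrightarrow> S \<phi> \<le> c) \<Longrightarrow> P x \<le> c"
  unfolding Ppart_def
  by (rule cSup_least) (auto simp: nonneg_part_def intro: fzero_T0)

lemma P_nonneg: assumes x: "x \<in> nonneg_part T0" shows "0 \<le> P x"
proof -
  have z: "fzero \<in> T0" using fzero_T0 nn_T0[OF x] by blast
  show ?thesis using P_upper[OF x z order_refl nn_ge[OF x]] S_zero[OF z] by simp
qed

lemma P_zero: "fzero \<in> T0 \<Longrightarrow> P fzero = 0"
proof -
  assume z: "fzero \<in> T0"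
  then have zn: "fzero \<in> nonneg_part T0" by (simp add: nonneg_part_def)
  have "P fzero \<le> 0"
    by (rule P_least[OF zn]) (metis antisym z S_zero order_refl)
  then show ?thesis using P_nonneg[OF zn] by simp
qed

lemma fadd_nn: "fzero \<le> x \<Longrightarrow> fzero \<le> y \<Longrightarrow> fadd x y = (\<lambda>t. x t + y t)"
  by (auto simp: fadd_def fzero_def le_fun_def e_add_nonneg)

lemma nn_fadd: assumes x: "x \<in> nonneg_part T0" and y: "y \<in> nonneg_part T0"
  shows "fadd x y \<in> nonneg_part T0"
proof -
  have "fadd x y \<in> T0" using fadd_T0 nn_T0 x y by blast
  moreover have "fzero \<le> fadd x y" using nn_ge[OF x] nn_ge[OF y]
    by (auto simp: fadd_nn fzero_def le_fun_def)
  ultimately show ?thesis by (simp add: nonneg_part_def)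
qed

lemma P_add: assumes x1: "x1 \<in> nonneg_part T0" and x2: "x2 \<in> nonneg_part T0"
  shows "P (fadd x1 x2) = P x1 + P x2"
proof -
  define s where "s = fadd x1 x2"
  have sn: "s \<in> nonneg_part T0" using x1 x2 by (simp add: s_def nn_fadd)
  have ge: "P x1 + P x2 \<le> P s"
  proof -
    have "S \<phi>2 \<le> P s - P x1" if p2: "\<phi>2 \<in> T0" "fzero \<le> \<phi>2" "\<phi>2 \<le> x2" for \<phi>2
    proof -
      have "P x1 \<le> P s - S \<phi>2"
      proof (rule P_least[OF x1])
        fix \<phi>1 assume p1: "\<phi>1 \<in> T0" "fzero \<le> \<phi>1" "\<phi>1 \<le> x1"
        have le: "fadd \<phi>1 \<phi>2 \<le> s" using p1 p2
          by (auto simp: s_def fadd_nn[OF nn_ge[OF x1] nn_ge[OF x2]] fadd_nn[OF p1(2) p2(2)] le_fun_def intro: add_mono)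
        have "fzero \<le> fadd \<phi>1 \<phi>2" using p1 p2 by (auto simp: fadd_nn fzero_def le_fun_def)
        then have "S (fadd \<phi>1 \<phi>2) \<le> P s" using P_upper[OF sn _ _ le] p1 p2 fadd_T0 by blast
        then show "S \<phi>1 \<le> P s - S \<phi>2" using S_add p1 p2 by simp
      qed
      then show ?thesis by simp
    qed
    then have "P x2 \<le> P s - P x1" by (intro P_least[OF x2])
    then show ?thesis by simp
  qed
  have le: "P s \<le> P x1 + P x2"
  proof (rule P_least[OF sn])
    fix \<phi> assume p: "\<phi> \<in> T0" "fzero \<le> \<phi>" "\<phi> \<le> s"
    define \<phi>1 where "\<phi>1 = inf \<phi> x1"
    define \<phi>2 where "\<phi>2 = fsub \<phi> \<phi>1"
    have T1: "\<phi>1 \<in> T0" using p x1 by (simp add: \<phi>1_def inf_T0 nn_T0)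
    have T2: "\<phi>2 \<in> T0" using p T1 by (simp add: \<phi>2_def fsub_T0)
    have pt1: "\<phi>1 t = min (\<phi> t) (x1 t)" for t by (simp add: \<phi>1_def inf_min)
    have pt2: "\<phi>2 t = eadd (\<phi> t) (-(min (\<phi> t) (x1 t)))" for t
      by (simp add: \<phi>2_def fsub_def fadd_def fneg_def pt1)
    have g: "0 \<le> \<phi> t" "0 \<le> x1 t" "0 \<le> x2 t" "\<phi> t \<le> x1 t + x2 t" for t
      using p x1 x2 nn_ge[OF x1] nn_ge[OF x2]
      by (auto simp: s_def fadd_nn fzero_def le_fun_def)
    have n1: "fzero \<le> \<phi>1" "\<phi>1 \<le> x1" using g by (auto simp: fzero_def le_fun_def pt1)
    have n2: "fzero \<le> \<phi>2" "\<phi>2 \<le> x2" using e_split2[OF g] by (auto simp: fzero_def le_fun_def pt2)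
    have eq: "fadd \<phi>1 \<phi>2 = \<phi>"
      using e_split g by (auto simp: fadd_def fun_eq_iff pt1 pt2)
    have "S \<phi> = S \<phi>1 + S \<phi>2" using S_add[OF T1 T2] eq by simp
    also have "\<dots> \<le> P x1 + P x2" using P_upper[OF x1 T1 n1] P_upper[OF x2 T2 n2] by simp
    finally show "S \<phi> \<le> P x1 + P x2" .
  qed
  show ?thesis using ge le by (simp add: s_def)
qed

lemma pos_part_nn: "x \<in> T0 \<Longrightarrow> sup x fzero \<in> nonneg_part T0"
  by (auto simp: nonneg_part_def sup_T0 fzero_T0)

lemma neg_part_nn: "x \<in> T0 \<Longrightarrow> sup (fneg x) fzero \<in> nonneg_part T0"
  by (auto simp: nonneg_part_def sup_T0 fzero_T0 fneg_T0)

lemma Splus_repr: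
  assumes x: "x \<in> T0" and f: "\<phi> \<in> nonneg_part T0" and g: "\<psi> \<in> nonneg_part T0"
    and eq: "x = fsub \<phi> \<psi>"
  shows "Splus T0 S x = P \<phi> - P \<psi>"
proof -
  have e: "fadd (sup x fzero) \<psi> = fadd (sup (fneg x) fzero) \<phi>"
    using nn_ge[OF f] nn_ge[OF g]
    by (auto simp: fun_eq_iff eq fsub_def fadd_def fneg_def fzero_def le_fun_def sup_max e_pm)
  have "P (sup x fzero) + P \<psi> = P (sup (fneg x) fzero) + P \<phi>"
    using P_add[OF pos_part_nn[OF x] g] P_add[OF neg_part_nn[OF x] f] e by simp
  then show ?thesis by (simp add: Splus_def)
qed

lemma fscale_nn: assumes c: "0 \<le> c" and f: "\<phi> \<in> nonneg_part T0"
  shows "fscale c \<phi> \<in> nonneg_part T0"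
proof -
  have "fscale c \<phi> \<in> T0" using fscale_T0 nn_T0[OF f] by blast
  moreover have "fzero \<le> fscale c \<phi>" using nn_ge[OF f] c
    by (auto simp: fscale_def fzero_def le_fun_def e_nn)
  ultimately show ?thesis by (simp add: nonneg_part_def)
qed

lemma fscale_mono: "0 \<le> c \<Longrightarrow> \<phi> \<le> \<psi> \<Longrightarrow> fscale c \<phi> \<le> fscale c \<psi>"
  by (auto simp: fscale_def le_fun_def intro: ereal_mult_left_mono)

lemma P_scale_half:
  assumes d: "0 < d" and f: "\<phi> \<in> nonneg_part T0"
  shows "d * P \<phi> \<le> P (fscale d \<phi>)"
proof -
  have dn: "fscale d \<phi> \<in> nonneg_part T0" using fscale_nn d f by simp
  have "P \<phi> \<le> P (fscale d \<phi>) / d"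
  proof (rule P_least[OF f])
    fix \<psi> assume p: "\<psi> \<in> T0" "fzero \<le> \<psi>" "\<psi> \<le> \<phi>"
    have pn: "\<psi> \<in> nonneg_part T0" using p by (simp add: nonneg_part_def)
    have "S (fscale d \<psi>) \<le> P (fscale d \<phi>)"
      using P_upper[OF dn fscale_T0[OF p(1)] nn_ge[OF fscale_nn[OF _ pn]] fscale_mono[OF _ p(3)]] d by simp
    then have "d * S \<psi> \<le> P (fscale d \<phi>)" using S_scale p by simp
    then show "S \<psi> \<le> P (fscale d \<phi>) / d" using d by (simp add: field_simps)
  qed
  then show ?thesis using d by (simp add: field_simps)
qed

lemma P_scale:
  assumes c: "0 \<le> c" and f: "\<phi> \<in> nonneg_part T0"
  shows "P (fscale c \<phi>) = c * P \<phi>"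
proof (cases "c = 0")
  case True
  then show ?thesis using P_zero fzero_T0 nn_T0[OF f] by (simp add: fscale_zero)
next
  case False
  then have c0: "0 < c" using c by simp
  have cn: "fscale c \<phi> \<in> nonneg_part T0" using fscale_nn c f by simp
  have inv: "fscale (1/c) (fscale c \<phi>) = \<phi>" using c0 by (simp add: fscale_def e_inv)
  have "(1/c) * P (fscale c \<phi>) \<le> P \<phi>" using P_scale_half[OF _ cn, of "1/c"] c0 inv by simp
  then have "P (fscale c \<phi>) \<le> c * P \<phi>" using c0 by (simp add: field_simps)
  then show ?thesis using P_scale_half[OF c0 f] by simp
qed

lemma Splus_nn: "x \<in> nonneg_part T0 \<Longrightarrow> Splus T0 S x = P x"
proof -
  assume x: "x \<in> nonneg_part T0"
  have z: "fzero \<in> T0" using fzero_T0 nn_T0[OF x] by blast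
  have "sup x fzero = x" using nn_ge[OF x] by (simp add: sup.absorb1)
  moreover have "sup (fneg x) fzero = fzero" using nn_ge[OF x]
    by (auto simp: fun_eq_iff fneg_def fzero_def le_fun_def sup_max max_def)
  ultimately show ?thesis by (simp add: Splus_def P_zero[OF z])
qed

lemma Splus_add: assumes x: "x \<in> T0" and y: "y \<in> T0"
  shows "Splus T0 S (fadd x y) = Splus T0 S x + Splus T0 S y"
proof -
  define u where "u = fadd (sup x fzero) (sup y fzero)"
  define v where "v = fadd (sup (fneg x) fzero) (sup (fneg y) fzero)"
  have un: "u \<in> nonneg_part T0" using u_def nn_fadd pos_part_nn x y by simp
  have vn: "v \<in> nonneg_part T0" using v_def nn_fadd neg_part_nn x y by simp
  have eq: "fadd x y = fsub u v"
    by (simp add: fun_eq_iff u_def v_def fsub_def fadd_def fneg_def fzero_def sup_max e_lin[of "x _" "y _"])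
  have "Splus T0 S (fadd x y) = P u - P v" using Splus_repr[OF fadd_T0[OF x y] un vn eq] .
  also have "\<dots> = Splus T0 S x + Splus T0 S y"
    using P_add[OF pos_part_nn[OF x] pos_part_nn[OF y]] P_add[OF neg_part_nn[OF x] neg_part_nn[OF y]]
    by (simp add: u_def v_def Splus_def)
  finally show ?thesis .
qed

lemma Splus_scale: assumes x: "x \<in> T0"
  shows "Splus T0 S (fscale c x) = c * Splus T0 S x"
proof (cases "0 \<le> c")
  case True
  have "sup (fscale c x) fzero = fscale c (sup x fzero)"
    using True by (simp add: fun_eq_iff fscale_def fzero_def sup_max e_sc1)
  moreover have "sup (fneg (fscale c x)) fzero = fscale c (sup (fneg x) fzero)"
    using True by (simp add: fun_eq_iff fscale_def fneg_def fzero_def sup_max e_sc1')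
  ultimately show ?thesis using True P_scale pos_part_nn[OF x] neg_part_nn[OF x]
    by (simp add: Splus_def right_diff_distrib)
next
  case False
  then have c: "c < 0" by simp
  have "sup (fscale c x) fzero = fscale (-c) (sup (fneg x) fzero)"
    using c by (simp add: fun_eq_iff fscale_def fneg_def fzero_def sup_max e_sc2)
  moreover have "sup (fneg (fscale c x)) fzero = fscale (-c) (sup x fzero)"
    using c by (simp add: fun_eq_iff fscale_def fneg_def fzero_def sup_max e_sc2')
  ultimately show ?thesis using c P_scale pos_part_nn[OF x] neg_part_nn[OF x]
    by (simp add: Splus_def algebra_simps)
qed

lemma P_cont:
  assumes xsT: "\<And>n. xs n \<in> T0" and dz: "decr_to_zero xs"
  shows "(\<lambda>n. P (xs n)) \<longlonglongrightarrow> 0"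
proof -
  have nn: "xs n \<in> nonneg_part T0" for n using xsT decr_nonneg[OF dz] by (simp add: nonneg_part_def)
  define x where "x = xs 0"
  have xn: "x \<in> nonneg_part T0" using nn x_def by simp
  have le0: "xs n \<le> x" for n using decr_le0[OF dz] x_def by simp
  define z where "z n = fsub x (xs n)" for n
  have zpt: "z n t = eadd (x t) (- xs n t)" for n t by (simp add: z_def fsub_def fadd_def fneg_def)
  have zn: "z n \<in> nonneg_part T0" for n
  proof -
    have "z n \<in> T0" using fsub_T0 nn_T0 xn nn z_def by simp
    moreover have "fzero \<le> z n" using e_sub_nonneg nn_ge[OF nn[of n]] le0[of n]
      by (auto simp: le_fun_def fzero_def zpt)
    ultimately show ?thesis by (simp add: nonneg_part_def)
  qed
  have xz: "fadd (z n) (xs n) = x" for n using e_sub_nonneg nn_ge[OF nn[of n]] le0[of n]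
    by (auto simp: fun_eq_iff le_fun_def fzero_def zpt fadd_def)
  have Pz: "P x = P (z n) + P (xs n)" for n using P_add[OF zn nn, of n n] xz by simp
  show ?thesis
  proof (rule LIMSEQ_I)
    fix e :: real assume e: "0 < e"
    have "P x - e < Sup {S \<phi> | \<phi>. \<phi> \<in> T0 \<and> fzero \<le> \<phi> \<and> \<phi> \<le> x}" using e by (simp add: Ppart_def)
    moreover have "{S \<phi> | \<phi>. \<phi> \<in> T0 \<and> fzero \<le> \<phi> \<and> \<phi> \<le> x} \<noteq> {}"
      using fzero_T0 nn_T0[OF xn] nn_ge[OF xn] by blast
    ultimately obtain y where y: "y \<in> T0" "fzero \<le> y" "y \<le> x" "P x - e < S y"
      by (auto elim!: less_cSupE)
    define w where "w n = fsub y (inf y (z n))" for n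
    have wT: "w n \<in> T0" for n using y(1) zn nn_T0 inf_T0 fsub_T0 w_def by simp
    have wpt: "w n t = eadd (y t) (-(min (y t) (eadd (x t) (-(xs n t)))))" for n t
      by (simp add: w_def zpt fsub_def fadd_def fneg_def inf_min)
    have yg: "0 \<le> y t" "y t \<le> x t" for t using y by (auto simp: le_fun_def fzero_def)
    have xg: "0 \<le> xs n t" "xs n t \<le> x t" for n t using nn_ge[OF nn[of n]] le0[of n]
      by (auto simp: le_fun_def fzero_def)
    have xsuc: "xs (Suc n) t \<le> xs n t" for n t using dz by (auto simp: decr_to_zero_def le_fun_def)
    have "decr_to_zero w"
      unfolding decr_to_zero_def
    proof (intro conjI allI)
      fix n show "w (Suc n) \<le> w n"
        unfolding le_fun_def wpt using e_dec2 yg xg xsuc by blast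
    next
      fix t
      have lim: "(\<lambda>n. xs n t) \<longlonglongrightarrow> 0" using dz by (simp add: decr_to_zero_def)
      show "(\<lambda>n. w n t) \<longlonglongrightarrow> 0"
      proof (rule tendsto_sandwich[of "\<lambda>n. 0" _ _ "\<lambda>n. xs n t"])
        show "\<forall>\<^sub>F n in sequentially. 0 \<le> w n t" using e_dec1 yg xg by (simp add: wpt)
        show "\<forall>\<^sub>F n in sequentially. w n t \<le> xs n t" using e_dec1 yg xg by (simp add: wpt)
      qed (use lim in auto)
    qed
    then have "(\<lambda>n. S (w n)) \<longlonglongrightarrow> 0" using S_cont wT by blast
    moreover have "0 < S y - (P x - e)" using y by simp
    ultimately obtain N where N: "\<forall>n\<ge>N. norm (S (w n) - 0) < S y - (P x - e)"
      using LIMSEQ_D by blast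
    show "\<exists>no. \<forall>n\<ge>no. norm (P (xs n) - 0) < e"
    proof (intro exI allI impI)
      fix n assume "N \<le> n"
      then have Sw: "\<bar>S (w n)\<bar> < S y - (P x - e)" using N by simp
      define q where "q = inf y (z n)"
      have qT: "q \<in> T0" using y(1) zn nn_T0 inf_T0 q_def by simp
      have q0: "fzero \<le> q" using y(2) nn_ge[OF zn[of n]] by (simp add: q_def)
      have qz: "q \<le> z n" by (simp add: q_def)
      have spl: "fadd q (w n) = y"
      proof -
        have "0 \<le> min (y t) (z n t)" "min (y t) (z n t) \<le> y t" for t
          using yg nn_ge[OF zn[of n]] by (auto simp: le_fun_def fzero_def)
        then show ?thesis using e_split
          by (auto simp: fun_eq_iff fadd_def q_def w_def fsub_def fneg_def inf_min)
      qed
      have "S y = S q + S (w n)" using S_add[OF qT wT[of n]] spl by simp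
      moreover have "S q \<le> P (z n)" using P_upper[OF zn qT q0 qz] .
      ultimately have "P x - e < P (z n)" using Sw by simp
      then have "P (xs n) < e" using Pz[of n] by simp
      moreover have "0 \<le> P (xs n)" using P_nonneg[OF nn] .
      ultimately show "norm (P (xs n) - 0) < e" by simp
    qed
  qed
qed

lemma Splus_I: "I_integral T0 (Splus T0 S)"
  unfolding I_integral_def linear_on_def
proof (intro conjI ballI allI impI)
  show "Splus T0 S (fadd x y) = Splus T0 S x + Splus T0 S y" if "x \<in> T0" "y \<in> T0" for x y
    using Splus_add that by blast
  show "Splus T0 S (fscale c x) = c * Splus T0 S x" if "x \<in> T0" for x c using Splus_scale that by blast
  show "0 \<le> Splus T0 S x" if "x \<in> T0" "fzero \<le> x" for x
    using that Splus_nn P_nonneg by (simp add: nonneg_part_def)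
  show "(\<lambda>n. Splus T0 S (xs n)) \<longlonglongrightarrow> 0" if "(\<forall>n. xs n \<in> T0) \<and> decr_to_zero xs" for xs
  proof -
    have "xs n \<in> nonneg_part T0" for n
      using that decr_nonneg[of xs n] by (simp add: nonneg_part_def)
    then have "Splus T0 S (xs n) = P (xs n)" for n
      using Splus_nn by blast
    then show ?thesis using P_cont that by simp
  qed
qed

lemma S_le_P: "x \<in> nonneg_part T0 \<Longrightarrow> S x \<le> P x"
  using P_upper[of x x] by (simp add: nonneg_part_def)

lemma Sminus_I: "I_integral T0 (Sminus T0 S)"
  unfolding I_integral_def linear_on_def Sminus_def
proof (intro conjI ballI allI impI)
  show "Splus T0 S (fadd x y) - S (fadd x y) = Splus T0 S x - S x + (Splus T0 S y - S y)"
    if "x \<in> T0" "y \<in> T0" for x y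
    using Splus_add S_add that by simp
  show "Splus T0 S (fscale c x) - S (fscale c x) = c * (Splus T0 S x - S x)" if "x \<in> T0" for x c
    using Splus_scale S_scale that by (simp add: right_diff_distrib)
  show "0 \<le> Splus T0 S x - S x" if "x \<in> T0" "fzero \<le> x" for x
    using that Splus_nn S_le_P by (simp add: nonneg_part_def)
  show "(\<lambda>n. Splus T0 S (xs n) - S (xs n)) \<longlonglongrightarrow> 0" if "(\<forall>n. xs n \<in> T0) \<and> decr_to_zero xs" for xs
  proof -
    have "(\<lambda>n. Splus T0 S (xs n)) \<longlonglongrightarrow> 0" using Splus_I that unfolding I_integral_def by blast
    moreover have "(\<lambda>n. S (xs n)) \<longlonglongrightarrow> 0" using S_cont that by blast
    ultimately show ?thesis using tendsto_diff by fastforce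
  qed
qed

lemma Sabs_I: "I_integral T0 (Sabs T0 S)"
  unfolding I_integral_def linear_on_def Sabs_def Sminus_def
proof (intro conjI ballI allI impI)
  show "Splus T0 S (fadd x y) + (Splus T0 S (fadd x y) - S (fadd x y)) =
        Splus T0 S x + (Splus T0 S x - S x) + (Splus T0 S y + (Splus T0 S y - S y))"
    if "x \<in> T0" "y \<in> T0" for x y
    using Splus_add S_add that by simp
  show "Splus T0 S (fscale c x) + (Splus T0 S (fscale c x) - S (fscale c x)) =
        c * (Splus T0 S x + (Splus T0 S x - S x))" if "x \<in> T0" for x c
    using Splus_scale S_scale that by (simp add: algebra_simps)
  show "0 \<le> Splus T0 S x + (Splus T0 S x - S x)" if "x \<in> T0" "fzero \<le> x" for x
  proof -
    have xn: "x \<in> nonneg_part T0" using that by (simp add: nonneg_part_def)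
    show ?thesis using Splus_nn[OF xn] S_le_P[OF xn] P_nonneg[OF xn] by linarith
  qed
  show "(\<lambda>n. Splus T0 S (xs n) + (Splus T0 S (xs n) - S (xs n))) \<longlonglongrightarrow> 0"
    if "(\<forall>n. xs n \<in> T0) \<and> decr_to_zero xs" for xs
  proof -
    have a: "(\<lambda>n. Splus T0 S (xs n)) \<longlonglongrightarrow> 0" using Splus_I that unfolding I_integral_def by blast
    have b: "(\<lambda>n. S (xs n)) \<longlonglongrightarrow> 0" using S_cont that by blast
    show ?thesis using tendsto_add[OF a tendsto_diff[OF a b]] by simp
  qed
qed

end

theorem mainTheorem17:
  fixes T0 :: "('a \<Rightarrow> ereal) set" and S :: "('a \<Rightarrow> ereal) \<Rightarrow> real"
  assumes "ext_vector_lattice T0"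
    and "S_integral T0 S"
  shows "(\<forall>x\<in>nonneg_part T0. bdd_above {S \<phi> | \<phi>. \<phi> \<in> T0 \<and> fzero \<le> \<phi> \<and> \<phi> \<le> x})
    \<and> (\<forall>x1\<in>nonneg_part T0. \<forall>x2\<in>nonneg_part T0.
          Ppart T0 S (fadd x1 x2) = Ppart T0 S x1 + Ppart T0 S x2)
    \<and> (\<forall>x\<in>T0. \<forall>\<phi>\<in>nonneg_part T0. \<forall>\<psi>\<in>nonneg_part T0.
          x = fsub \<phi> \<psi> \<longrightarrow> Splus T0 S x = Ppart T0 S \<phi> - Ppart T0 S \<psi>)
    \<and> I_integral T0 (Splus T0 S)
    \<and> I_integral T0 (Sminus T0 S)
    \<and> I_integral T0 (Sabs T0 S)
    \<and> (\<forall>x\<in>T0. S x = Splus T0 S x - Sminus T0 S x)"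
proof -
  interpret SI T0 S using assms by unfold_locales
  show ?thesis
    apply (intro conjI)
    subgoal by (rule ballI, rule A_bdd)
    subgoal using P_add by blast
    subgoal using Splus_repr by blast
    subgoal using Splus_I by blast
    subgoal using Sminus_I by blast
    subgoal using Sabs_I by blast
    subgoal by (simp add: Sminus_def)
    done
qed

end
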